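(* Let $X\neq\emptyset$ be a set, $\Phi$ a nonempty set of bounded functions $X\to\mathbb{R}$ that is compact with respect to $D_\Phi$, and assume $(X,D_X)$ is complete. Let $G$ be a subgroup of $\mathrm{Homeo}_\Phi(X)$, equipped with the pseudo-metric $D_G$. Then $G$ is a topological group with respect to the topology induced by $D_G$ (composition $G\times G\to G$ and inversion $G\to G$ are continuous), and the right action $\Phi\times G\to\Phi$, $(\varphi,g)\mapsto\varphi\circ g$, is continuous (with respect to $D_\Phi$ and $D_G$).
   Context: $D_\Phi(\varphi_1,\varphi_2):=\|\varphi_1-\varphi_2\|_\infty$. $D_X(x_1,x_2):=\sup_{\varphi\in\Phi}|\varphi(x_1)-\varphi(x_2)|$. $\mathrm{Homeo}_\Phi(X)$ is the group of bijections $g:X\to X$ that are homeomorphisms for the topology of $D_X$ and satisfy $\varphi\circ g\in\Phi$ and $\varphi\circ g^{-1}\in\Phi$ for all $\varphi\in\Phi$. For $g_1,g_2\in G$, $D_G(g_1,g_2):=\sup_{\varphi\in\Phi}D_\Phi(\varphi\circ g_1,\varphi\circ g_2)$. *)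

theory Defs
  imports "HOL-Analysis.Analysis"
begin

text \<open>The underlying set X is the whole (nonempty) type 'a.\<close>

definition pm_topology :: "'a set \<Rightarrow> ('a \<Rightarrow> 'a \<Rightarrow> real) \<Rightarrow> 'a topology" where
  "pm_topology S d = topology (\<lambda>U. U \<subseteq> S \<and> (\<forall>x\<in>U. \<exists>e>0. \<forall>y\<in>S. d x y < e \<longrightarrow> y \<in> U))"

definition pm_complete :: "'a set \<Rightarrow> ('a \<Rightarrow> 'a \<Rightarrow> real) \<Rightarrow> bool" where
  "pm_complete S d \<longleftrightarrow>
     (\<forall>\<sigma>. (\<forall>n. \<sigma> n \<in> S) \<and> (\<forall>e>0. \<exists>N. \<forall>m n. N \<le> m \<and> N \<le> n \<longrightarrow> d (\<sigma> m) (\<sigma> n) < e)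
        \<longrightarrow> (\<exists>l\<in>S. (\<lambda>n. d (\<sigma> n) l) \<longlonglongrightarrow> 0))"

definition D_Phi :: "('a \<Rightarrow> real) \<Rightarrow> ('a \<Rightarrow> real) \<Rightarrow> real" where
  "D_Phi \<phi>1 \<phi>2 = (SUP x. \<bar>\<phi>1 x - \<phi>2 x\<bar>)"

definition D_X :: "('a \<Rightarrow> real) set \<Rightarrow> 'a \<Rightarrow> 'a \<Rightarrow> real" where
  "D_X \<Phi> x1 x2 = (SUP \<phi>\<in>\<Phi>. \<bar>\<phi> x1 - \<phi> x2\<bar>)"

definition Homeo_Phi :: "('a \<Rightarrow> real) set \<Rightarrow> ('a \<Rightarrow> 'a) set" where
  "Homeo_Phi \<Phi> = {g. bij g
      \<and> homeomorphic_map (pm_topology UNIV (D_X \<Phi>)) (pm_topology UNIV (D_X \<Phi>)) g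
      \<and> (\<forall>\<phi>\<in>\<Phi>. \<phi> \<circ> g \<in> \<Phi> \<and> \<phi> \<circ> inv g \<in> \<Phi>)}"

definition D_G :: "('a \<Rightarrow> real) set \<Rightarrow> ('a \<Rightarrow> 'a) \<Rightarrow> ('a \<Rightarrow> 'a) \<Rightarrow> real" where
  "D_G \<Phi> g1 g2 = (SUP \<phi>\<in>\<Phi>. D_Phi (\<phi> \<circ> g1) (\<phi> \<circ> g2))"

definition is_subgroup_of :: "('a \<Rightarrow> 'a) set \<Rightarrow> ('a \<Rightarrow> 'a) set \<Rightarrow> bool" where
  "is_subgroup_of G H \<longleftrightarrow> G \<subseteq> H \<and> id \<in> G \<and> (\<forall>g\<in>G. \<forall>h\<in>G. g \<circ> h \<in> G) \<and> (\<forall>g\<in>G. inv g \<in> G)"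

end

theory Submission imports Defs begin

lemma pm_open: "openin (pm_topology S d) U \<longleftrightarrow> U \<subseteq> S \<and> (\<forall>x\<in>U. \<exists>e>0. \<forall>y\<in>S. d x y < e \<longrightarrow> y \<in> U)"
proof -
  have "istopology (\<lambda>U. U \<subseteq> S \<and> (\<forall>x\<in>U. \<exists>e>0. \<forall>y\<in>S. d x y < e \<longrightarrow> y \<in> U))"
    unfolding istopology_def
  proof (rule conjI; intro allI impI)
    fix A B assume A: "A \<subseteq> S \<and> (\<forall>x\<in>A. \<exists>e>0. \<forall>y\<in>S. d x y < e \<longrightarrow> y \<in> A)"
      and B: "B \<subseteq> S \<and> (\<forall>x\<in>B. \<exists>e>0. \<forall>y\<in>S. d x y < e \<longrightarrow> y \<in> B)"
    show "A \<inter> B \<subseteq> S \<and> (\<forall>x\<in>A \<inter> B. \<exists>e>0. \<forall>y\<in>S. d x y < e \<longrightarrow> y \<in> A \<inter> B)"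
    proof (intro conjI ballI)
      show "A \<inter> B \<subseteq> S" using A by blast
      fix x assume "x \<in> A \<inter> B"
      then obtain e1 e2 where "e1>0" "e2>0" "\<forall>y\<in>S. d x y < e1 \<longrightarrow> y \<in> A" "\<forall>y\<in>S. d x y < e2 \<longrightarrow> y \<in> B"
        using A B by blast
      then show "\<exists>e>0. \<forall>y\<in>S. d x y < e \<longrightarrow> y \<in> A \<inter> B"
        by (intro exI[of _ "min e1 e2"]) auto
    qed
  next
    fix K assume "\<forall>A\<in>K. A \<subseteq> S \<and> (\<forall>x\<in>A. \<exists>e>0. \<forall>y\<in>S. d x y < e \<longrightarrow> y \<in> A)"
    then show "\<Union>K \<subseteq> S \<and> (\<forall>x\<in>\<Union>K. \<exists>e>0. \<forall>y\<in>S. d x y < e \<longrightarrow> y \<in> \<Union>K)"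
      by (meson Union_iff Union_least)
  qed
  then show ?thesis unfolding pm_topology_def by simp
qed

lemma pm_topspace: "topspace (pm_topology S d) = S"
proof -
  have "openin (pm_topology S d) S" unfolding pm_open using zero_less_one by blast
  then have "S \<subseteq> topspace (pm_topology S d)" by (auto dest: openin_subset)
  moreover have "topspace (pm_topology S d) \<subseteq> S"
    using pm_open[of S d "topspace (pm_topology S d)"] by simp
  ultimately show ?thesis by blast
qed

lemma pm_cont1:
  assumes "f ` S \<subseteq> T"
    and "\<And>x e. x \<in> S \<Longrightarrow> e > 0 \<Longrightarrow> \<exists>k>0. \<forall>y\<in>S. d x y < k \<longrightarrow> d' (f x) (f y) < e"
  shows "continuous_map (pm_topology S d) (pm_topology T d') f"
  unfolding continuous_map pm_topspace
proof (intro conjI allI impI assms(1))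
  fix U assume "openin (pm_topology T d') U"
  then have U: "U \<subseteq> T" "\<forall>x\<in>U. \<exists>e>0. \<forall>y\<in>T. d' x y < e \<longrightarrow> y \<in> U" by (auto simp: pm_open)
  show "openin (pm_topology S d) {x \<in> S. f x \<in> U}"
    unfolding pm_open
  proof (intro conjI ballI)
    fix x assume x: "x \<in> {x \<in> S. f x \<in> U}"
    then obtain e where "e>0" "\<forall>y\<in>T. d' (f x) y < e \<longrightarrow> y \<in> U" using U by blast
    moreover obtain k where "k>0" "\<forall>y\<in>S. d x y < k \<longrightarrow> d' (f x) (f y) < e"
      using assms(2) x \<open>e>0\<close> by blast
    ultimately show "\<exists>e>0. \<forall>y\<in>S. d x y < e \<longrightarrow> y \<in> {x \<in> S. f x \<in> U}"
      using assms(1) by (intro exI[of _ k]) auto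
  qed auto
qed

lemma pm_ball_open:
  assumes tri: "\<And>x y z. x \<in> S \<Longrightarrow> y \<in> S \<Longrightarrow> z \<in> S \<Longrightarrow> d x z \<le> d x y + d y z"
    and "x \<in> S"
  shows "openin (pm_topology S d) {y\<in>S. d x y < r}"
  unfolding pm_open
proof (intro conjI ballI)
  fix z assume z: "z \<in> {y\<in>S. d x y < r}"
  show "\<exists>e>0. \<forall>y\<in>S. d z y < e \<longrightarrow> y \<in> {y\<in>S. d x y < r}"
  proof (intro exI[of _ "r - d x z"] conjI ballI impI)
    show "r - d x z > 0" using z by simp
    fix y assume "y \<in> S" "d z y < r - d x z"
    then show "y \<in> {y\<in>S. d x y < r}" using tri[of x z y] z assms(2) by auto
  qed
qed auto

lemma pm_cont2:
  assumes tri1: "\<And>x y z. x \<in> S \<Longrightarrow> y \<in> S \<Longrightarrow> z \<in> S \<Longrightarrow> d1 x z \<le> d1 x y + d1 y z"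
    and tri2: "\<And>x y z. x \<in> T \<Longrightarrow> y \<in> T \<Longrightarrow> z \<in> T \<Longrightarrow> d2 x z \<le> d2 x y + d2 y z"
    and r1: "\<And>x. x \<in> S \<Longrightarrow> d1 x x = 0" and r2: "\<And>x. x \<in> T \<Longrightarrow> d2 x x = 0"
    and into: "\<And>x y. x \<in> S \<Longrightarrow> y \<in> T \<Longrightarrow> f (x, y) \<in> R"
    and cont: "\<And>x y e. x \<in> S \<Longrightarrow> y \<in> T \<Longrightarrow> e > 0 \<Longrightarrow> \<exists>k>0. \<forall>x'\<in>S. \<forall>y'\<in>T.
                 d1 x x' < k \<longrightarrow> d2 y y' < k \<longrightarrow> d3 (f (x, y)) (f (x', y')) < e"
  shows "continuous_map (prod_topology (pm_topology S d1) (pm_topology T d2)) (pm_topology R d3) f"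
  unfolding continuous_map pm_topspace topspace_prod_topology
proof (intro conjI allI impI)
  show "f ` (S \<times> T) \<subseteq> R" using into by auto
  fix U assume "openin (pm_topology R d3) U"
  then have U: "U \<subseteq> R" "\<forall>x\<in>U. \<exists>e>0. \<forall>y\<in>R. d3 x y < e \<longrightarrow> y \<in> U" by (auto simp: pm_open)
  show "openin (prod_topology (pm_topology S d1) (pm_topology T d2)) {x \<in> S \<times> T. f x \<in> U}"
    unfolding openin_prod_topology_alt
  proof (intro allI impI)
    fix x y assume xy: "(x, y) \<in> {x \<in> S \<times> T. f x \<in> U}"
    then obtain e where "e>0" "\<forall>z\<in>R. d3 (f (x,y)) z < e \<longrightarrow> z \<in> U" using U by blast
    moreover obtain k where "k>0" "\<forall>x'\<in>S. \<forall>y'\<in>T.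
                 d1 x x' < k \<longrightarrow> d2 y y' < k \<longrightarrow> d3 (f (x, y)) (f (x', y')) < e"
      using cont[of x y e] xy \<open>e>0\<close> by auto
    ultimately show "\<exists>A B. openin (pm_topology S d1) A \<and> openin (pm_topology T d2) B \<and> x \<in> A \<and> y \<in> B \<and> A \<times> B \<subseteq> {x \<in> S \<times> T. f x \<in> U}"
      using xy into
      by (intro exI[of _ "{x'\<in>S. d1 x x' < k}"] exI[of _ "{y'\<in>T. d2 y y' < k}"])
         (auto intro!: pm_ball_open tri1 tri2 simp: tri1 tri2 r1 r2)
  qed
qed

lemma bdd_diff:
  fixes f g :: "'a \<Rightarrow> real"
  assumes "\<And>x. \<bar>f x\<bar> \<le> B1" "\<And>x. \<bar>g x\<bar> \<le> B2"
  shows "bdd_above (range (\<lambda>x. \<bar>f x - g x\<bar>))"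
proof (rule bdd_aboveI2[of _ _ "B1 + B2"])
  fix x show "\<bar>f x - g x\<bar> \<le> B1 + B2" using assms[of x] by linarith
qed

lemma bounded_fun: "bounded (range f) \<Longrightarrow> \<exists>B. \<forall>x. \<bar>(f::'a\<Rightarrow>real) x\<bar> \<le> B"
  unfolding bounded_iff by auto

lemma DPhi_ge:
  assumes "\<And>x. \<bar>f x\<bar> \<le> B1" "\<And>x. \<bar>g x\<bar> \<le> B2"
  shows "\<bar>f x - g x\<bar> \<le> D_Phi f g"
  unfolding D_Phi_def by (rule cSUP_upper[OF _ bdd_diff[OF assms]]) simp

lemma DPhi_le:
  assumes "\<And>x. \<bar>f x - g x\<bar> \<le> c"
  shows "D_Phi f g \<le> c"
  unfolding D_Phi_def by (rule cSUP_least) (auto simp: assms)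

lemma DPhi_tri:
  assumes "\<And>x. \<bar>f x\<bar> \<le> B" "\<And>x. \<bar>g x\<bar> \<le> B" "\<And>x. \<bar>h x\<bar> \<le> B"
  shows "D_Phi f h \<le> D_Phi f g + D_Phi g h"
proof (rule DPhi_le)
  fix x
  have "\<bar>f x - g x\<bar> \<le> D_Phi f g" by (rule DPhi_ge[of _ B _ B]) (use assms in auto)
  have "\<bar>g x - h x\<bar> \<le> D_Phi g h" by (rule DPhi_ge[of _ B _ B]) (use assms in auto)
  note this \<open>\<bar>f x - g x\<bar> \<le> D_Phi f g\<close>
  then show "\<bar>f x - h x\<bar> \<le> D_Phi f g + D_Phi g h" by linarith
qed

lemma DPhi_refl: "D_Phi f f = 0"
  unfolding D_Phi_def by simp

context
  fixes \<Phi> :: "('a \<Rightarrow> real) set" and B :: real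
  assumes ne: "\<Phi> \<noteq> {}" and bd: "\<And>\<phi> x. \<phi> \<in> \<Phi> \<Longrightarrow> \<bar>\<phi> x\<bar> \<le> B"
begin

lemma DG_ge:
  assumes "\<phi> \<in> \<Phi>"
  shows "\<bar>\<phi> (g1 x) - \<phi> (g2 x)\<bar> \<le> D_G \<Phi> g1 g2"
proof -
  have "\<bar>(\<phi> \<circ> g1) x - (\<phi> \<circ> g2) x\<bar> \<le> D_Phi (\<phi> \<circ> g1) (\<phi> \<circ> g2)"
    by (rule DPhi_ge[of _ B _ B]) (auto simp: bd assms)
  also have "\<dots> \<le> D_G \<Phi> g1 g2"
    unfolding D_G_def
  proof (rule cSUP_upper[OF assms], rule bdd_aboveI2[of _ _ "2*B"])
    fix \<psi> assume "\<psi> \<in> \<Phi>"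
    show "D_Phi (\<psi> \<circ> g1) (\<psi> \<circ> g2) \<le> 2 * B"
    proof (rule DPhi_le)
      fix x show "\<bar>(\<psi> \<circ> g1) x - (\<psi> \<circ> g2) x\<bar> \<le> 2 * B"
        using bd[OF \<open>\<psi> \<in> \<Phi>\<close>, of "g1 x"] bd[OF \<open>\<psi> \<in> \<Phi>\<close>, of "g2 x"] by simp
    qed
  qed
  finally show ?thesis by simp
qed

lemma DG_le:
  assumes "\<And>\<phi> x. \<phi> \<in> \<Phi> \<Longrightarrow> \<bar>\<phi> (g1 x) - \<phi> (g2 x)\<bar> \<le> c"
  shows "D_G \<Phi> g1 g2 \<le> c"
  unfolding D_G_def
proof (rule cSUP_least[OF ne])
  fix \<phi> assume "\<phi> \<in> \<Phi>"
  show "D_Phi (\<phi> \<circ> g1) (\<phi> \<circ> g2) \<le> c"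
    by (rule DPhi_le) (simp add: assms \<open>\<phi> \<in> \<Phi>\<close>)
qed

lemma DG_tri: "D_G \<Phi> g1 g3 \<le> D_G \<Phi> g1 g2 + D_G \<Phi> g2 g3"
proof (rule DG_le)
  fix \<phi> x assume p: "\<phi> \<in> \<Phi>"
  have "\<bar>\<phi> (g1 x) - \<phi> (g2 x)\<bar> \<le> D_G \<Phi> g1 g2" "\<bar>\<phi> (g2 x) - \<phi> (g3 x)\<bar> \<le> D_G \<Phi> g2 g3"
    using DG_ge[OF p] by blast+
  then show "\<bar>\<phi> (g1 x) - \<phi> (g3 x)\<bar> \<le> D_G \<Phi> g1 g2 + D_G \<Phi> g2 g3" by linarith
qed

lemma DG_refl: "D_G \<Phi> g g = 0"
proof -
  have "D_G \<Phi> g g \<le> 0" by (rule DG_le) simp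
  moreover obtain \<phi> where "\<phi> \<in> \<Phi>" using ne by blast
  then have "0 \<le> D_G \<Phi> g g" using DG_ge[of \<phi> g undefined g] by simp
  ultimately show ?thesis by simp
qed

end

lemma uniform_bound:
  assumes bdd: "\<forall>\<phi>\<in>\<Phi>. bounded (range \<phi>)"
    and cpt: "compact_space (pm_topology \<Phi> D_Phi)"
  shows "\<exists>B. \<forall>\<phi>\<in>\<Phi>. \<forall>x. \<bar>\<phi> x\<bar> \<le> B"
proof -
  define U where "U n = {\<psi>\<in>\<Phi>. \<exists>c<real n. \<forall>x. \<bar>\<psi> x\<bar> \<le> c}" for n :: nat
  have op: "openin (pm_topology \<Phi> D_Phi) (U n)" for n
    unfolding pm_open
  proof (intro conjI ballI)
    show "U n \<subseteq> \<Phi>" by (auto simp: U_def)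
    fix \<psi> assume "\<psi> \<in> U n"
    then obtain c where c: "\<psi> \<in> \<Phi>" "c < real n" "\<forall>x. \<bar>\<psi> x\<bar> \<le> c" by (auto simp: U_def)
    show "\<exists>e>0. \<forall>y\<in>\<Phi>. D_Phi \<psi> y < e \<longrightarrow> y \<in> U n"
    proof (intro exI[of _ "real n - c"] conjI ballI impI)
      show "real n - c > 0" using c by simp
      fix y assume y: "y \<in> \<Phi>" "D_Phi \<psi> y < real n - c"
      obtain By where By: "\<forall>x. \<bar>y x\<bar> \<le> By" using bounded_fun bdd y(1) by blast
      have "\<forall>x. \<bar>y x\<bar> \<le> c + D_Phi \<psi> y"
      proof
        fix x
        have "\<bar>\<psi> x - y x\<bar> \<le> D_Phi \<psi> y" by (rule DPhi_ge[of _ c _ By]) (use c By in auto)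
        then show "\<bar>y x\<bar> \<le> c + D_Phi \<psi> y" using c(3)[rule_format, of x] by linarith
      qed
      then show "y \<in> U n" unfolding U_def using y by (intro CollectI conjI exI[of _ "c + D_Phi \<psi> y"]) auto
    qed
  qed
  have cov: "\<Phi> \<subseteq> \<Union>(range U)"
  proof
    fix \<psi> assume p: "\<psi> \<in> \<Phi>"
    obtain b where b: "\<forall>x. \<bar>\<psi> x\<bar> \<le> b" using bounded_fun bdd p by blast
    obtain n :: nat where "b < real n" using reals_Archimedean2 by blast
    then have "\<psi> \<in> U n" using p b unfolding U_def by auto
    then show "\<psi> \<in> \<Union>(range U)" by blast
  qed
  have "\<exists>F. finite F \<and> F \<subseteq> range U \<and> \<Phi> \<subseteq> \<Union>F"
    apply (rule cpt[unfolded compact_space_alt pm_topspace, rule_format])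
    using op cov by auto
  then obtain F where F: "finite F" "F \<subseteq> range U" "\<Phi> \<subseteq> \<Union>F"
    by blast
  obtain N where N: "N \<subseteq> UNIV" "finite N" "F = U ` N"
    using finite_subset_image[OF F(1,2)] by blast
  show ?thesis
  proof (intro exI[of _ "real (\<Sum>N)"] ballI allI)
    fix \<psi> x assume "\<psi> \<in> \<Phi>"
    moreover have "\<Phi> \<subseteq> \<Union>(U ` N)" using F(3) N(3) by simp
    ultimately have "\<psi> \<in> \<Union>(U ` N)" by (rule subsetD[rotated])
    then obtain m where m: "m \<in> N" "\<psi> \<in> U m" by (rule UN_E)
    then have "\<exists>c<real m. \<forall>x. \<bar>\<psi> x\<bar> \<le> c" unfolding U_def by simp
    then obtain c where "c < real m" "\<bar>\<psi> x\<bar> \<le> c" by blast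
    moreover have "m \<le> \<Sum>N" using member_le_sum[of m N id] m(1) N(2) by simp
    ultimately show "\<bar>\<psi> x\<bar> \<le> real (\<Sum>N)" by linarith
  qed
qed


theorem mainTheorem5:
  fixes \<Phi> :: "('a \<Rightarrow> real) set" and G :: "('a \<Rightarrow> 'a) set"
  assumes "\<Phi> \<noteq> {}"
    and "\<forall>\<phi>\<in>\<Phi>. bounded (range \<phi>)"
    and "compact_space (pm_topology \<Phi> D_Phi)"
    and "pm_complete UNIV (D_X \<Phi>)"
    and "is_subgroup_of G (Homeo_Phi \<Phi>)"
  shows "continuous_map (prod_topology (pm_topology G (D_G \<Phi>)) (pm_topology G (D_G \<Phi>)))
           (pm_topology G (D_G \<Phi>)) (\<lambda>(g, h). g \<circ> h)
     \<and> continuous_map (pm_topology G (D_G \<Phi>)) (pm_topology G (D_G \<Phi>)) inv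
     \<and> continuous_map (prod_topology (pm_topology \<Phi> D_Phi) (pm_topology G (D_G \<Phi>)))
           (pm_topology \<Phi> D_Phi) (\<lambda>(\<phi>, g). \<phi> \<circ> g)"
proof -
  obtain B where B: "\<And>\<phi> x. \<phi> \<in> \<Phi> \<Longrightarrow> \<bar>\<phi> x\<bar> \<le> B"
    using uniform_bound[OF assms(2,3)] by blast
  note ne = assms(1)
  have sg: "G \<subseteq> Homeo_Phi \<Phi>" "\<And>g h. g \<in> G \<Longrightarrow> h \<in> G \<Longrightarrow> g \<circ> h \<in> G" "\<And>g. g \<in> G \<Longrightarrow> inv g \<in> G"
    using assms(5) unfolding is_subgroup_of_def by auto
  have hom: "bij g" "\<And>\<phi>. \<phi> \<in> \<Phi> \<Longrightarrow> \<phi> \<circ> g \<in> \<Phi>" "\<And>\<phi>. \<phi> \<in> \<Phi> \<Longrightarrow> \<phi> \<circ> inv g \<in> \<Phi>" if "g \<in> G" for g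
    using sg(1) that unfolding Homeo_Phi_def by auto
  have Gge: "\<And>\<phi> g1 g2 x. \<phi> \<in> \<Phi> \<Longrightarrow> \<bar>\<phi> (g1 x) - \<phi> (g2 x)\<bar> \<le> D_G \<Phi> g1 g2"
    by (rule DG_ge[of \<Phi> B]) (use ne B in auto)
  have Gle: "\<And>g1 g2 c. (\<And>\<phi> x. \<phi> \<in> \<Phi> \<Longrightarrow> \<bar>\<phi> (g1 x) - \<phi> (g2 x)\<bar> \<le> c) \<Longrightarrow> D_G \<Phi> g1 g2 \<le> c"
    by (rule DG_le[of \<Phi> B]) (use ne B in auto)
  have Gtri: "\<And>x y z. D_G \<Phi> x z \<le> D_G \<Phi> x y + D_G \<Phi> y z"
    by (rule DG_tri[of \<Phi> B]) (use ne B in auto)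
  have Grefl: "\<And>x. D_G \<Phi> x x = 0"
    by (rule DG_refl[of \<Phi> B]) (use ne B in auto)
  have Ptri: "\<And>x y z. x \<in> \<Phi> \<Longrightarrow> y \<in> \<Phi> \<Longrightarrow> z \<in> \<Phi> \<Longrightarrow> D_Phi x z \<le> D_Phi x y + D_Phi y z"
    by (rule DPhi_tri[of _ B]) (auto simp: B)
  have C1: "continuous_map (prod_topology (pm_topology G (D_G \<Phi>)) (pm_topology G (D_G \<Phi>)))
           (pm_topology G (D_G \<Phi>)) (\<lambda>(g, h). g \<circ> h)"
  proof (rule pm_cont2[OF Gtri Gtri Grefl Grefl])
    show "\<And>x y. x \<in> G \<Longrightarrow> y \<in> G \<Longrightarrow> (case (x, y) of (g, h) \<Rightarrow> g \<circ> h) \<in> G" using sg by auto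
    fix g h :: "'a \<Rightarrow> 'a" and e :: real assume g: "g \<in> G" and h: "h \<in> G" and e: "e > 0"
    show "\<exists>k>0. \<forall>x'\<in>G. \<forall>y'\<in>G. D_G \<Phi> g x' < k \<longrightarrow> D_G \<Phi> h y' < k \<longrightarrow>
            D_G \<Phi> (case (g, h) of (g, h) \<Rightarrow> g \<circ> h) (case (x', y') of (g, h) \<Rightarrow> g \<circ> h) < e"
    proof (intro exI[of _ "e/2"] conjI ballI impI)
      fix g' h' assume g': "g' \<in> G" and h': "h' \<in> G" and d1: "D_G \<Phi> g g' < e/2" and d2: "D_G \<Phi> h h' < e/2"
      have "D_G \<Phi> (g \<circ> h) (g' \<circ> h') \<le> D_G \<Phi> h h' + D_G \<Phi> g g'"
      proof (rule Gle)
        fix \<phi> x assume p: "\<phi> \<in> \<Phi>"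
        have "\<bar>(\<phi> \<circ> g) (h x) - (\<phi> \<circ> g) (h' x)\<bar> \<le> D_G \<Phi> h h'" using Gge hom(2)[OF g p] by blast
        moreover have "\<bar>\<phi> (g (h' x)) - \<phi> (g' (h' x))\<bar> \<le> D_G \<Phi> g g'" using Gge p by blast
        ultimately show "\<bar>\<phi> ((g \<circ> h) x) - \<phi> ((g' \<circ> h') x)\<bar> \<le> D_G \<Phi> h h' + D_G \<Phi> g g'" by simp
      qed
      then show "D_G \<Phi> (case (g, h) of (g, h) \<Rightarrow> g \<circ> h) (case (g', h') of (g, h) \<Rightarrow> g \<circ> h) < e"
        using d1 d2 by simp
    qed (use e in simp)
  qed
  have C2: "continuous_map (pm_topology G (D_G \<Phi>)) (pm_topology G (D_G \<Phi>)) inv"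
  proof (rule pm_cont1)
    show "inv ` G \<subseteq> G" using sg by auto
    fix g :: "'a \<Rightarrow> 'a" and e :: real assume g: "g \<in> G" and e: "e > 0"
    show "\<exists>k>0. \<forall>y\<in>G. D_G \<Phi> g y < k \<longrightarrow> D_G \<Phi> (inv g) (inv y) < e"
    proof (intro exI[of _ e] conjI ballI impI)
      fix g' assume g': "g' \<in> G" and d: "D_G \<Phi> g g' < e"
      have "D_G \<Phi> (inv g) (inv g') \<le> D_G \<Phi> g g'"
      proof (rule Gle)
        fix \<phi> x assume p: "\<phi> \<in> \<Phi>"
        define y where "y = inv g' x"
        have xy: "x = g' y" unfolding y_def using hom(1)[OF g'] by (simp add: bij_is_surj surj_f_inv_f)
        have iy: "inv g (g y) = y" using hom(1)[OF g] by (simp add: bij_is_inj)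
        have "\<bar>(\<phi> \<circ> inv g) (g y) - (\<phi> \<circ> inv g) (g' y)\<bar> \<le> D_G \<Phi> g g'" using Gge hom(3)[OF g p] by blast
        then show "\<bar>\<phi> (inv g x) - \<phi> (inv g' x)\<bar> \<le> D_G \<Phi> g g'"
          using iy unfolding y_def[symmetric] by (simp add: xy abs_minus_commute)
      qed
      then show "D_G \<Phi> (inv g) (inv g') < e" using d by simp
    qed (use e in simp)
  qed
  have C3: "continuous_map (prod_topology (pm_topology \<Phi> D_Phi) (pm_topology G (D_G \<Phi>)))
           (pm_topology \<Phi> D_Phi) (\<lambda>(\<phi>, g). \<phi> \<circ> g)"
  proof (rule pm_cont2[OF Ptri Gtri _ Grefl])
    show "\<And>x. x \<in> \<Phi> \<Longrightarrow> D_Phi x x = 0" by (rule DPhi_refl)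
    show "\<And>x y. x \<in> \<Phi> \<Longrightarrow> y \<in> G \<Longrightarrow> (case (x, y) of (\<phi>, g) \<Rightarrow> \<phi> \<circ> g) \<in> \<Phi>" using hom by auto
    fix \<phi> :: "'a \<Rightarrow> real" and g :: "'a \<Rightarrow> 'a" and e :: real assume p: "\<phi> \<in> \<Phi>" and g: "g \<in> G" and e: "e > 0"
    show "\<exists>k>0. \<forall>x'\<in>\<Phi>. \<forall>y'\<in>G. D_Phi \<phi> x' < k \<longrightarrow> D_G \<Phi> g y' < k \<longrightarrow>
            D_Phi (case (\<phi>, g) of (\<phi>, g) \<Rightarrow> \<phi> \<circ> g) (case (x', y') of (\<phi>, g) \<Rightarrow> \<phi> \<circ> g) < e"
    proof (intro exI[of _ "e/2"] conjI ballI impI)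
      fix \<phi>' g' assume p': "\<phi>' \<in> \<Phi>" and g': "g' \<in> G" and d1: "D_Phi \<phi> \<phi>' < e/2" and d2: "D_G \<Phi> g g' < e/2"
      have "D_Phi (\<phi> \<circ> g) (\<phi>' \<circ> g') \<le> D_Phi \<phi> \<phi>' + D_G \<Phi> g g'"
      proof (rule DPhi_le)
        fix x
        have "\<bar>\<phi> (g x) - \<phi>' (g x)\<bar> \<le> D_Phi \<phi> \<phi>'" by (rule DPhi_ge[of _ B _ B]) (auto simp: B p p')
        moreover have "\<bar>\<phi>' (g x) - \<phi>' (g' x)\<bar> \<le> D_G \<Phi> g g'" using Gge p' by blast
        ultimately show "\<bar>(\<phi> \<circ> g) x - (\<phi>' \<circ> g') x\<bar> \<le> D_Phi \<phi> \<phi>' + D_G \<Phi> g g'" by simp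
      qed
      then show "D_Phi (case (\<phi>, g) of (\<phi>, g) \<Rightarrow> \<phi> \<circ> g) (case (\<phi>', g') of (\<phi>, g) \<Rightarrow> \<phi> \<circ> g) < e"
        using d1 d2 by simp
    qed (use e in simp)
  qed
  show ?thesis using C1 C2 C3 by blast
qed

end
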